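(* Let $(G,\mathcal{P})$ and $(H,\mathcal{Q})$ be group pairs. (i) If $q\colon(G,\mathcal{P})\to(H,\mathcal{Q})$ is a quasi-isometry of pairs such that the projections $\dot q\to G/\mathcal{P}$ and $\dot q\to H/\mathcal{Q}$ are bijective, then $(G,\mathcal{P})$ and $(H,\mathcal{Q})$ are strongly quasi-isometric. (ii) If $(G,\mathcal{P})$ and $(H,\mathcal{Q})$ are strongly quasi-isometric, then they are quasi-isometric (i.e. there is a quasi-isometry of pairs between them).
   Context: A group pair $(G,\mathcal{P})$: $G$ finitely generated with a word metric for a finite generating set, $\mathcal{P}$ a non-empty finite collection of subgroups (repetitions allowed); $G/\mathcal{P}=\coprod_{P\in\mathcal{P}}G/P$, elements viewed as cosets (subsets of $G$). $f$ is $(L,C)$-Lipschitz if $d(f(x),f(x'))\le L\,d(x,x')+C$. Fix $L\ge1,C\ge0,M\ge0$. For $q\colon G\to H$ let $\dot q=\{(A,B)\in G/\mathcal{P}\times H/\mathcal{Q}: \text{Hausdorff distance in }H\text{ between }q(A)\text{ and }B\text{ is }<M\}$. An $(L,C,M)$-quasi-isometry of pairs is an $(L,C)$-quasi-isometry $q\colon G\to H$ such that both projections $\dot q\to G/\mathcal{P}$, $\dot q\to H/\mathcal{Q}$ are surjective. An $(L,C,M)$-Lipschitz map of pairs $f=(f_1,f_2)\colon(G,\mathcal{P})\to(H,\mathcal{Q})$ is an $(L,C)$-Lipschitz $f_1\colon G\to H$ and a function $f_2\colon G/\mathcal{P}\to H/\mathcal{Q}$ with Hausdorff distance between $f_1(A)$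 and $f_2(A)$ less than $M$ for all $A$. $(f,r)$ is an $(L,C,M)$-quasi-retraction of pairs if $f\colon(G,\mathcal{P})\to(H,\mathcal{Q})$, $r\colon(H,\mathcal{Q})\to(G,\mathcal{P})$ are such maps with $d_G(r_1f_1(g),g)\le C$ for all $g$ and $r_2\circ f_2=\mathrm{id}$. $f$ is a strong $(L,C,M)$-quasi-isometry of pairs if there is an $(L,C,M)$-Lipschitz map of pairs $r$ with $(f,r)$ and $(r,f)$ both $(L,C,M)$-quasi-retractions. Pairs are (strongly) quasi-isometric if such maps exist for some constants $L,C,M$. *)

theory Defs
  imports "HOL-Algebra.Algebra" "HOL-Library.Extended_Real"
begin

definition word_length :: "('a, 'b) monoid_scheme \<Rightarrow> 'a set \<Rightarrow> 'a \<Rightarrow> nat" where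
  "word_length G S g =
     (LEAST n. \<exists>ws. length ws = n \<and> set ws \<subseteq> S \<union> (m_inv G ` S) \<and>
                    foldr (\<lambda>x y. x \<otimes>\<^bsub>G\<^esub> y) ws \<one>\<^bsub>G\<^esub> = g)"

definition wdist :: "('a, 'b) monoid_scheme \<Rightarrow> 'a set \<Rightarrow> 'a \<Rightarrow> 'a \<Rightarrow> real" where
  "wdist G S x y = real (word_length G S (inv\<^bsub>G\<^esub> x \<otimes>\<^bsub>G\<^esub> y))"

definition hausdorff :: "('a, 'b) monoid_scheme \<Rightarrow> 'a set \<Rightarrow> 'a set \<Rightarrow> 'a set \<Rightarrow> ereal" where
  "hausdorff G S A B =
     max (SUP a\<in>A. INF b\<in>B. ereal (wdist G S a b)) (SUP b\<in>B. INF a\<in>A. ereal (wdist G S a b))"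

definition group_pair :: "('a, 'b) monoid_scheme \<Rightarrow> 'a set \<Rightarrow> 'a set list \<Rightarrow> bool" where
  "group_pair G S Ps \<longleftrightarrow> group G \<and> finite S \<and> S \<subseteq> carrier G \<and> generate G S = carrier G \<and>
     Ps \<noteq> [] \<and> (\<forall>P\<in>set Ps. subgroup P G)"

text \<open>G/P as a disjoint union: a coset gP_i is tagged with its index i.\<close>
definition cosets :: "('a, 'b) monoid_scheme \<Rightarrow> 'a set list \<Rightarrow> (nat \<times> 'a set) set" where
  "cosets G Ps = {(i, a <#\<^bsub>G\<^esub> (Ps ! i)) | i a. i < length Ps \<and> a \<in> carrier G}"

definition lipschitz_map ::
  "('a, 'b) monoid_scheme \<Rightarrow> 'a set \<Rightarrow> ('c, 'd) monoid_scheme \<Rightarrow> 'c set \<Rightarrow> real \<Rightarrow> real \<Rightarrow> ('a \<Rightarrow> 'c) \<Rightarrow> bool" where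
  "lipschitz_map G S H T L C f \<longleftrightarrow> f ` carrier G \<subseteq> carrier H \<and>
     (\<forall>x\<in>carrier G. \<forall>y\<in>carrier G. wdist H T (f x) (f y) \<le> L * wdist G S x y + C)"

definition quasi_isometry ::
  "('a, 'b) monoid_scheme \<Rightarrow> 'a set \<Rightarrow> ('c, 'd) monoid_scheme \<Rightarrow> 'c set \<Rightarrow> real \<Rightarrow> real \<Rightarrow> ('a \<Rightarrow> 'c) \<Rightarrow> bool" where
  "quasi_isometry G S H T L C q \<longleftrightarrow> q ` carrier G \<subseteq> carrier H \<and>
     (\<forall>x\<in>carrier G. \<forall>y\<in>carrier G.
        wdist G S x y / L - C \<le> wdist H T (q x) (q y) \<and> wdist H T (q x) (q y) \<le> L * wdist G S x y + C) \<and>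
     (\<forall>h\<in>carrier H. \<exists>g\<in>carrier G. wdist H T (q g) h \<le> C)"

definition qdot ::
  "('a, 'b) monoid_scheme \<Rightarrow> 'a set list \<Rightarrow> ('c, 'd) monoid_scheme \<Rightarrow> 'c set \<Rightarrow> 'c set list \<Rightarrow> real \<Rightarrow> ('a \<Rightarrow> 'c)
     \<Rightarrow> ((nat \<times> 'a set) \<times> (nat \<times> 'c set)) set" where
  "qdot G Ps H T Qs M q = {(A, B). A \<in> cosets G Ps \<and> B \<in> cosets H Qs \<and>
      hausdorff H T (q ` snd A) (snd B) < ereal M}"

definition qi_pairs ::
  "('a, 'b) monoid_scheme \<Rightarrow> 'a set \<Rightarrow> 'a set list \<Rightarrow> ('c, 'd) monoid_scheme \<Rightarrow> 'c set \<Rightarrow> 'c set list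
     \<Rightarrow> real \<Rightarrow> real \<Rightarrow> real \<Rightarrow> ('a \<Rightarrow> 'c) \<Rightarrow> bool" where
  "qi_pairs G S Ps H T Qs L C M q \<longleftrightarrow> quasi_isometry G S H T L C q \<and>
     fst ` qdot G Ps H T Qs M q = cosets G Ps \<and> snd ` qdot G Ps H T Qs M q = cosets H Qs"

definition lipschitz_pairs ::
  "('a, 'b) monoid_scheme \<Rightarrow> 'a set \<Rightarrow> 'a set list \<Rightarrow> ('c, 'd) monoid_scheme \<Rightarrow> 'c set \<Rightarrow> 'c set list
     \<Rightarrow> real \<Rightarrow> real \<Rightarrow> real \<Rightarrow> ('a \<Rightarrow> 'c) \<Rightarrow> (nat \<times> 'a set \<Rightarrow> nat \<times> 'c set) \<Rightarrow> bool" where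
  "lipschitz_pairs G S Ps H T Qs L C M f1 f2 \<longleftrightarrow> lipschitz_map G S H T L C f1 \<and>
     f2 ` cosets G Ps \<subseteq> cosets H Qs \<and>
     (\<forall>A\<in>cosets G Ps. hausdorff H T (f1 ` snd A) (snd (f2 A)) < ereal M)"

definition quasi_retraction_pairs ::
  "('a, 'b) monoid_scheme \<Rightarrow> 'a set \<Rightarrow> 'a set list \<Rightarrow> ('c, 'd) monoid_scheme \<Rightarrow> 'c set \<Rightarrow> 'c set list
     \<Rightarrow> real \<Rightarrow> real \<Rightarrow> real \<Rightarrow> ('a \<Rightarrow> 'c) \<Rightarrow> (nat \<times> 'a set \<Rightarrow> nat \<times> 'c set)
     \<Rightarrow> ('c \<Rightarrow> 'a) \<Rightarrow> (nat \<times> 'c set \<Rightarrow> nat \<times> 'a set) \<Rightarrow> bool" where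
  "quasi_retraction_pairs G S Ps H T Qs L C M f1 f2 r1 r2 \<longleftrightarrow>
     lipschitz_pairs G S Ps H T Qs L C M f1 f2 \<and> lipschitz_pairs H T Qs G S Ps L C M r1 r2 \<and>
     (\<forall>g\<in>carrier G. wdist G S (r1 (f1 g)) g \<le> C) \<and>
     (\<forall>A\<in>cosets G Ps. r2 (f2 A) = A)"

definition strong_qi_pairs ::
  "('a, 'b) monoid_scheme \<Rightarrow> 'a set \<Rightarrow> 'a set list \<Rightarrow> ('c, 'd) monoid_scheme \<Rightarrow> 'c set \<Rightarrow> 'c set list
     \<Rightarrow> real \<Rightarrow> real \<Rightarrow> real \<Rightarrow> ('a \<Rightarrow> 'c) \<Rightarrow> (nat \<times> 'a set \<Rightarrow> nat \<times> 'c set) \<Rightarrow> bool" where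
  "strong_qi_pairs G S Ps H T Qs L C M f1 f2 \<longleftrightarrow>
     (\<exists>r1 r2. lipschitz_pairs H T Qs G S Ps L C M r1 r2 \<and>
        quasi_retraction_pairs G S Ps H T Qs L C M f1 f2 r1 r2 \<and>
        quasi_retraction_pairs H T Qs G S Ps L C M r1 r2 f1 f2)"

definition pairs_quasi_isometric ::
  "('a, 'b) monoid_scheme \<Rightarrow> 'a set \<Rightarrow> 'a set list \<Rightarrow> ('c, 'd) monoid_scheme \<Rightarrow> 'c set \<Rightarrow> 'c set list \<Rightarrow> bool" where
  "pairs_quasi_isometric G S Ps H T Qs \<longleftrightarrow>
     (\<exists>L C M q. L \<ge> 1 \<and> C \<ge> 0 \<and> M \<ge> 0 \<and> qi_pairs G S Ps H T Qs L C M q)"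

definition pairs_strongly_quasi_isometric ::
  "('a, 'b) monoid_scheme \<Rightarrow> 'a set \<Rightarrow> 'a set list \<Rightarrow> ('c, 'd) monoid_scheme \<Rightarrow> 'c set \<Rightarrow> 'c set list \<Rightarrow> bool" where
  "pairs_strongly_quasi_isometric G S Ps H T Qs \<longleftrightarrow>
     (\<exists>L C M f1 f2. L \<ge> 1 \<and> C \<ge> 0 \<and> M \<ge> 0 \<and> strong_qi_pairs G S Ps H T Qs L C M f1 f2)"

end

theory Submission
  imports Defs
begin

definition wprod :: "('a, 'b) monoid_scheme \<Rightarrow> 'a list \<Rightarrow> 'a" where
  "wprod G ws = foldr (\<lambda>x y. x \<otimes>\<^bsub>G\<^esub> y) ws \<one>\<^bsub>G\<^esub>"

lemma wprod_simps: "wprod G [] = \<one>\<^bsub>G\<^esub>" "wprod G (x # ws) = x \<otimes>\<^bsub>G\<^esub> wprod G ws"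
  by (simp_all add: wprod_def)

lemma wprod_closed:
  assumes "group G" "set ws \<subseteq> carrier G" shows "wprod G ws \<in> carrier G"
  using assms(2) by (induction ws) (auto simp: wprod_simps group.is_monoid[OF assms(1)] monoid.m_closed)

lemma wprod_append:
  assumes "group G" "set xs \<subseteq> carrier G" "set ys \<subseteq> carrier G"
  shows "wprod G (xs @ ys) = wprod G xs \<otimes>\<^bsub>G\<^esub> wprod G ys"
  using assms(2)
proof (induction xs)
  case Nil then show ?case using wprod_closed[OF assms(1,3)] assms(1)
    by (simp add: wprod_simps group.is_monoid monoid.l_one)
next
  case (Cons x xs)
  then show ?case using wprod_closed[OF assms(1,3)] wprod_closed[OF assms(1), of xs] assms(1)
    by (simp add: wprod_simps group.is_monoid monoid.m_assoc)
qed

lemma wprod_rev_inv: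
  assumes "group G" "set ws \<subseteq> carrier G"
  shows "wprod G (rev (map (m_inv G) ws)) = inv\<^bsub>G\<^esub> (wprod G ws)"
  using assms(2)
proof (induction ws)
  case Nil then show ?case using assms(1) by (simp add: wprod_simps monoid.inv_one group.is_monoid)
next
  case (Cons x xs)
  have "set (rev (map (m_inv G) xs)) \<subseteq> carrier G" using Cons.prems assms(1) by (auto intro: group.inv_closed)
  then show ?case using Cons wprod_closed[OF assms(1), of xs] assms(1)
    by (simp add: wprod_append wprod_simps group.inv_mult_group group.inv_closed group.is_monoid monoid.r_one)
qed

definition isword :: "('a, 'b) monoid_scheme \<Rightarrow> 'a set \<Rightarrow> 'a list \<Rightarrow> bool" where
  "isword G S ws \<longleftrightarrow> set ws \<subseteq> S \<union> (m_inv G ` S)"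

lemma gen_word:
  assumes "group G" "S \<subseteq> carrier G" "g \<in> generate G S"
  shows "\<exists>ws. isword G S ws \<and> wprod G ws = g"
  using assms(3)
proof (induction rule: generate.induct)
  case one then show ?case by (intro exI[of _ "[]"]) (simp add: isword_def wprod_simps)
next
  case (incl h) then show ?case using assms
    by (intro exI[of _ "[h]"]) (auto simp: isword_def wprod_simps group.is_monoid monoid.r_one)
next
  case (inv h) then show ?case using assms
    by (intro exI[of _ "[inv\<^bsub>G\<^esub> h]"]) (auto simp: isword_def wprod_simps group.is_monoid monoid.r_one group.inv_closed)
next
  case (eng h1 h2)
  then obtain w1 w2 where "isword G S w1" "wprod G w1 = h1" "isword G S w2" "wprod G w2 = h2" by blast
  moreover have "S \<union> m_inv G ` S \<subseteq> carrier G" using assms by (auto intro: group.inv_closed)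
  ultimately show ?case using assms wprod_append[OF assms(1), of w1 w2]
    by (intro exI[of _ "w1 @ w2"]) (auto simp: isword_def)
qed

lemma word_length_alt: "word_length G S g = (LEAST n. \<exists>ws. length ws = n \<and> isword G S ws \<and> wprod G ws = g)"
  by (simp add: word_length_def isword_def wprod_def)

lemma wl_ex:
  assumes "group G" "S \<subseteq> carrier G" "generate G S = carrier G" "g \<in> carrier G"
  shows "\<exists>ws. length ws = word_length G S g \<and> isword G S ws \<and> wprod G ws = g"
proof -
  obtain ws where "isword G S ws \<and> wprod G ws = g" using gen_word[OF assms(1,2)] assms(3,4) by blast
  then have "\<exists>n ws. length ws = n \<and> isword G S ws \<and> wprod G ws = g" by blast
  then show ?thesis unfolding word_length_alt by (rule LeastI_ex)
qed

lemma wl_le: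
  assumes "isword G S ws" "wprod G ws = g"
  shows "word_length G S g \<le> length ws"
  unfolding word_length_alt using assms by (intro Least_le) blast

lemma wl_mult:
  assumes "group G" "S \<subseteq> carrier G" "generate G S = carrier G" "g \<in> carrier G" "h \<in> carrier G"
  shows "word_length G S (g \<otimes>\<^bsub>G\<^esub> h) \<le> word_length G S g + word_length G S h"
proof -
  obtain w1 where w1: "length w1 = word_length G S g" "isword G S w1" "wprod G w1 = g" using wl_ex assms by metis
  obtain w2 where w2: "length w2 = word_length G S h" "isword G S w2" "wprod G w2 = h" using wl_ex assms by metis
  have sub: "S \<union> m_inv G ` S \<subseteq> carrier G" using assms by (auto intro: group.inv_closed)
  have "isword G S (w1 @ w2)" "wprod G (w1 @ w2) = g \<otimes>\<^bsub>G\<^esub> h"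
  proof -
    have "set w1 \<subseteq> carrier G" "set w2 \<subseteq> carrier G" using w1(2) w2(2) sub unfolding isword_def by blast+
    then show "isword G S (w1 @ w2)" "wprod G (w1 @ w2) = g \<otimes>\<^bsub>G\<^esub> h"
      using w1 w2 wprod_append[OF assms(1), of w1 w2] by (auto simp: isword_def)
  qed
  from wl_le[OF this] show ?thesis using w1 w2 by simp
qed

lemma wl_inv:
  assumes "group G" "S \<subseteq> carrier G" "generate G S = carrier G" "g \<in> carrier G"
  shows "word_length G S (inv\<^bsub>G\<^esub> g) \<le> word_length G S g"
proof -
  obtain w1 where w1: "length w1 = word_length G S g" "isword G S w1" "wprod G w1 = g" using wl_ex assms by metis
  have sub: "S \<union> m_inv G ` S \<subseteq> carrier G" using assms by (auto intro: group.inv_closed)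
  have "isword G S (rev (map (m_inv G) w1))"
    using w1(2) assms(1,2) unfolding isword_def by (auto simp: group.inv_inv subsetD)
  moreover have "wprod G (rev (map (m_inv G) w1)) = inv\<^bsub>G\<^esub> g"
    using wprod_rev_inv[OF assms(1)] w1 sub unfolding isword_def by blast
  ultimately show ?thesis using wl_le w1 by fastforce
qed

lemma wdist_sym:
  assumes "group G" "S \<subseteq> carrier G" "generate G S = carrier G" "x \<in> carrier G" "y \<in> carrier G"
  shows "wdist G S x y = wdist G S y x"
proof -
  have e: "inv\<^bsub>G\<^esub> (inv\<^bsub>G\<^esub> x \<otimes>\<^bsub>G\<^esub> y) = inv\<^bsub>G\<^esub> y \<otimes>\<^bsub>G\<^esub> x"
    using assms by (simp add: group.inv_mult_group group.inv_inv group.inv_closed)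
  have c1: "inv\<^bsub>G\<^esub> x \<otimes>\<^bsub>G\<^esub> y \<in> carrier G" "inv\<^bsub>G\<^esub> y \<otimes>\<^bsub>G\<^esub> x \<in> carrier G"
    using assms by (auto intro: group.inv_closed monoid.m_closed group.is_monoid)
  have e2: "inv\<^bsub>G\<^esub> (inv\<^bsub>G\<^esub> y \<otimes>\<^bsub>G\<^esub> x) = inv\<^bsub>G\<^esub> x \<otimes>\<^bsub>G\<^esub> y"
    using assms by (simp add: group.inv_mult_group group.inv_inv group.inv_closed)
  show ?thesis using wl_inv[OF assms(1-3) c1(1)] wl_inv[OF assms(1-3) c1(2)] e e2
    unfolding wdist_def by simp
qed

lemma wdist_tri:
  assumes "group G" "S \<subseteq> carrier G" "generate G S = carrier G" "x \<in> carrier G" "y \<in> carrier G" "z \<in> carrier G"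
  shows "wdist G S x z \<le> wdist G S x y + wdist G S y z"
proof -
  interpret group G by fact
  have e: "inv\<^bsub>G\<^esub> x \<otimes>\<^bsub>G\<^esub> z = (inv\<^bsub>G\<^esub> x \<otimes>\<^bsub>G\<^esub> y) \<otimes>\<^bsub>G\<^esub> (inv\<^bsub>G\<^esub> y \<otimes>\<^bsub>G\<^esub> z)"
    using assms(4-6) by (simp add: m_assoc flip: m_assoc[of y "inv\<^bsub>G\<^esub> y"])
  have c1: "inv\<^bsub>G\<^esub> x \<otimes>\<^bsub>G\<^esub> y \<in> carrier G" "inv\<^bsub>G\<^esub> y \<otimes>\<^bsub>G\<^esub> z \<in> carrier G"
    using assms by (auto intro: group.inv_closed monoid.m_closed group.is_monoid)
  show ?thesis using wl_mult[OF assms(1-3) c1] e unfolding wdist_def by simp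
qed


lemma haus_le:
  assumes "\<forall>a\<in>A. \<exists>b\<in>B. wdist G S a b \<le> K" "\<forall>b\<in>B. \<exists>a\<in>A. wdist G S a b \<le> K"
  shows "hausdorff G S A B \<le> ereal K"
  unfolding hausdorff_def
proof (rule max.boundedI)
  show "(SUP a\<in>A. INF b\<in>B. ereal (wdist G S a b)) \<le> ereal K"
  proof (rule SUP_least)
    fix a assume "a \<in> A"
    then obtain b where "b \<in> B" "wdist G S a b \<le> K" using assms(1) by blast
    then show "(INF b\<in>B. ereal (wdist G S a b)) \<le> ereal K" by (intro INF_lower2[of b]) simp_all
  qed
  show "(SUP b\<in>B. INF a\<in>A. ereal (wdist G S a b)) \<le> ereal K"
  proof (rule SUP_least)
    fix b assume "b \<in> B"
    then obtain a where "a \<in> A" "wdist G S a b \<le> K" using assms(2) by blast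
    then show "(INF a\<in>A. ereal (wdist G S a b)) \<le> ereal K" by (intro INF_lower2[of a]) simp_all
  qed
qed

lemma haus_lt1:
  assumes "hausdorff G S A B < ereal M" "a \<in> A"
  shows "\<exists>b\<in>B. wdist G S a b < M"
proof -
  have "(INF b\<in>B. ereal (wdist G S a b)) \<le> (SUP a\<in>A. INF b\<in>B. ereal (wdist G S a b))"
    using assms(2) by (rule SUP_upper)
  also have "\<dots> < ereal M" using assms(1) unfolding hausdorff_def by simp
  finally have "\<exists>x\<in>B. ereal (wdist G S a x) < ereal M" by (simp only: INF_less_iff)
  then show ?thesis by simp
qed

lemma haus_lt2:
  assumes "hausdorff G S A B < ereal M" "b \<in> B"
  shows "\<exists>a\<in>A. wdist G S a b < M"
proof -
  have "(INF a\<in>A. ereal (wdist G S a b)) \<le> (SUP b\<in>B. INF a\<in>A. ereal (wdist G S a b))"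
    using assms(2) by (rule SUP_upper)
  also have "\<dots> < ereal M" using assms(1) unfolding hausdorff_def by simp
  finally have "\<exists>x\<in>A. ereal (wdist G S x b) < ereal M" by (simp only: INF_less_iff)
  then show ?thesis by simp
qed

lemma cosets_sub:
  assumes "group_pair G S Ps" "A \<in> cosets G Ps"
  shows "snd A \<subseteq> carrier G"
proof -
  obtain i a where "A = (i, a <#\<^bsub>G\<^esub> (Ps ! i))" "i < length Ps" "a \<in> carrier G"
    using assms(2) unfolding cosets_def by blast
  moreover have "group G" "subgroup (Ps ! i) G" using assms(1) \<open>i < length Ps\<close> unfolding group_pair_def by auto
  ultimately show ?thesis using group.l_coset_subset_G[of G "Ps ! i" a] subgroup.subset[of "Ps ! i" G] by simp
qed


lemma arith1:
  fixes L C D D' :: real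
  assumes "L \<ge> 1" "C \<ge> 0" "D \<le> 3 * C + L * D'"
  shows "D / L - 3 * C \<le> D'"
proof -
  have "D / L \<le> (3 * C + L * D') / L" using assms by (simp add: divide_right_mono)
  also have "\<dots> = 3 * C / L + D'" using assms by (simp add: add_divide_distrib)
  also have "3 * C / L \<le> 3 * C" using assms by (simp add: divide_le_eq) (metis mult_le_cancel_left1 mult.commute order.trans linorder_not_le less_le_trans zero_less_one mult_right_mono)
  finally show ?thesis by simp
qed

lemma part2:
  assumes gp1: "group_pair G S Ps" and gp2: "group_pair H T Qs"
    and sq: "pairs_strongly_quasi_isometric G S Ps H T Qs"
  shows "pairs_quasi_isometric G S Ps H T Qs"
proof -
  have mG: "group G" "S \<subseteq> carrier G" "generate G S = carrier G" using gp1 unfolding group_pair_def by auto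
  obtain L C M f1 f2 where LCM: "L \<ge> 1" "C \<ge> 0" "M \<ge> 0" and st: "strong_qi_pairs G S Ps H T Qs L C M f1 f2"
    using sq unfolding pairs_strongly_quasi_isometric_def by blast
  then obtain r1 r2 where
    q1: "quasi_retraction_pairs G S Ps H T Qs L C M f1 f2 r1 r2" and
    q2: "quasi_retraction_pairs H T Qs G S Ps L C M r1 r2 f1 f2"
    unfolding strong_qi_pairs_def by blast
  have f1c: "f1 ` carrier G \<subseteq> carrier H"
    and lipf: "\<forall>x\<in>carrier G. \<forall>y\<in>carrier G. wdist H T (f1 x) (f1 y) \<le> L * wdist G S x y + C"
    and f2c: "f2 ` cosets G Ps \<subseteq> cosets H Qs"
    and hf: "\<forall>A\<in>cosets G Ps. hausdorff H T (f1 ` snd A) (snd (f2 A)) < ereal M"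
    and r1c: "r1 ` carrier H \<subseteq> carrier G"
    and lipr: "\<forall>x\<in>carrier H. \<forall>y\<in>carrier H. wdist G S (r1 x) (r1 y) \<le> L * wdist H T x y + C"
    and r2c: "r2 ` cosets H Qs \<subseteq> cosets G Ps"
    and ret1: "\<forall>g\<in>carrier G. wdist G S (r1 (f1 g)) g \<le> C"
    and ret2: "\<forall>h\<in>carrier H. wdist H T (f1 (r1 h)) h \<le> C"
    and fr: "\<forall>B\<in>cosets H Qs. f2 (r2 B) = B"
    using q1 q2 unfolding quasi_retraction_pairs_def lipschitz_pairs_def lipschitz_map_def by auto
  have qi: "quasi_isometry G S H T L (3 * C) f1"
    unfolding quasi_isometry_def
  proof (intro conjI ballI)
    show "f1 ` carrier G \<subseteq> carrier H" by fact
  next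
    fix x y assume xy: "x \<in> carrier G" "y \<in> carrier G"
    have fx: "f1 x \<in> carrier H" "f1 y \<in> carrier H" using f1c xy by auto
    have rx: "r1 (f1 x) \<in> carrier G" "r1 (f1 y) \<in> carrier G" using r1c fx by auto
    have a1: "wdist G S (r1 (f1 x)) x \<le> C" "wdist G S (r1 (f1 y)) y \<le> C" using ret1 xy by blast+
    have a3: "wdist G S (r1 (f1 x)) (r1 (f1 y)) \<le> L * wdist H T (f1 x) (f1 y) + C"
      using lipr fx by blast
    have t1: "wdist G S x y \<le> wdist G S x (r1 (f1 x)) + wdist G S (r1 (f1 x)) y"
      using xy rx by (intro wdist_tri[OF mG])
    have t2: "wdist G S (r1 (f1 x)) y \<le> wdist G S (r1 (f1 x)) (r1 (f1 y)) + wdist G S (r1 (f1 y)) y"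
      using xy rx by (intro wdist_tri[OF mG])
    have t3: "wdist G S x (r1 (f1 x)) = wdist G S (r1 (f1 x)) x"
      using xy rx by (intro wdist_sym[OF mG])
    have "wdist G S x y \<le> 3 * C + L * wdist H T (f1 x) (f1 y)"
      using t1 t2 t3 a1 a3 by linarith
    then show "wdist G S x y / L - 3 * C \<le> wdist H T (f1 x) (f1 y)"
      using LCM by (intro arith1) auto
    show "wdist H T (f1 x) (f1 y) \<le> L * wdist G S x y + 3 * C"
    proof -
      have "wdist H T (f1 x) (f1 y) \<le> L * wdist G S x y + C" using lipf xy by blast
      then show ?thesis using LCM by linarith
    qed
  next
    fix h assume "h \<in> carrier H"
    show "\<exists>g\<in>carrier G. wdist H T (f1 g) h \<le> 3 * C"
    proof (rule bexI[of _ "r1 h"])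
      show "r1 h \<in> carrier G" using r1c \<open>h \<in> carrier H\<close> by auto
      have "wdist H T (f1 (r1 h)) h \<le> C" using ret2 \<open>h \<in> carrier H\<close> by blast
      then show "wdist H T (f1 (r1 h)) h \<le> 3 * C" using LCM by linarith
    qed
  qed
  have s1: "fst ` qdot G Ps H T Qs M f1 = cosets G Ps"
  proof
    show "fst ` qdot G Ps H T Qs M f1 \<subseteq> cosets G Ps" unfolding qdot_def by auto
    show "cosets G Ps \<subseteq> fst ` qdot G Ps H T Qs M f1"
    proof
      fix A assume A: "A \<in> cosets G Ps"
      then have "(A, f2 A) \<in> qdot G Ps H T Qs M f1" using f2c hf unfolding qdot_def by auto
      then show "A \<in> fst ` qdot G Ps H T Qs M f1" by force
    qed
  qed
  have s2: "snd ` qdot G Ps H T Qs M f1 = cosets H Qs"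
  proof
    show "snd ` qdot G Ps H T Qs M f1 \<subseteq> cosets H Qs" unfolding qdot_def by auto
    show "cosets H Qs \<subseteq> snd ` qdot G Ps H T Qs M f1"
    proof
      fix B assume B: "B \<in> cosets H Qs"
      then have "r2 B \<in> cosets G Ps" using r2c by auto
      then have "(r2 B, B) \<in> qdot G Ps H T Qs M f1" using B fr hf unfolding qdot_def by force
      then show "B \<in> snd ` qdot G Ps H T Qs M f1" by force
    qed
  qed
  show ?thesis unfolding pairs_quasi_isometric_def qi_pairs_def
    using qi s1 s2 LCM by (intro exI[of _ L] exI[of _ "3 * C"] exI[of _ M] exI[of _ f1]) auto
qed


lemma part1:
  assumes gp1: "group_pair G S Ps" and gp2: "group_pair H T Qs"
    and LCM: "L \<ge> 1" "C \<ge> 0" "M \<ge> 0" and qp: "qi_pairs G S Ps H T Qs L C M q"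
    and b1: "bij_betw fst (qdot G Ps H T Qs M q) (cosets G Ps)"
    and b2: "bij_betw snd (qdot G Ps H T Qs M q) (cosets H Qs)"
  shows "pairs_strongly_quasi_isometric G S Ps H T Qs"
proof -
  have mG: "group G" "S \<subseteq> carrier G" "generate G S = carrier G" using gp1 unfolding group_pair_def by auto
  have mH: "group H" "T \<subseteq> carrier H" "generate H T = carrier H" using gp2 unfolding group_pair_def by auto
  define qd where "qd = qdot G Ps H T Qs M q"
  have qc: "q ` carrier G \<subseteq> carrier H"
    and qlow: "\<forall>x\<in>carrier G. \<forall>y\<in>carrier G. wdist G S x y / L - C \<le> wdist H T (q x) (q y)"
    and qup: "\<forall>x\<in>carrier G. \<forall>y\<in>carrier G. wdist H T (q x) (q y) \<le> L * wdist G S x y + C"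
    and qden: "\<forall>h\<in>carrier H. \<exists>g\<in>carrier G. wdist H T (q g) h \<le> C"
    using qp unfolding qi_pairs_def quasi_isometry_def by auto
  have qd_mem: "A \<in> cosets G Ps \<and> B \<in> cosets H Qs \<and> hausdorff H T (q ` snd A) (snd B) < ereal M"
    if "(A, B) \<in> qd" for A B using that unfolding qd_def qdot_def by auto
  have i1: "inj_on fst qd" and i2: "inj_on snd qd" using b1 b2 unfolding qd_def bij_betw_def by auto
  have im1: "fst ` qd = cosets G Ps" and im2: "snd ` qd = cosets H Qs"
    using b1 b2 unfolding qd_def bij_betw_def by auto
  define f2 where "f2 A = (SOME B. (A, B) \<in> qd)" for A
  define r2 where "r2 B = (SOME A. (A, B) \<in> qd)" for B
  define r1 where "r1 h = (SOME g. g \<in> carrier G \<and> wdist H T (q g) h \<le> C)" for h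
  have F1: "(A, f2 A) \<in> qd" if hA: "A \<in> cosets G Ps" for A
  proof -
    have "A \<in> fst ` qd" using hA im1 by simp
    then obtain pr where "pr \<in> qd" "A = fst pr" by blast
    then have "(A, snd pr) \<in> qd" by simp
    then show ?thesis unfolding f2_def by (rule someI)
  qed
  have F2: "(r2 B, B) \<in> qd" if hB: "B \<in> cosets H Qs" for B
  proof -
    have "B \<in> snd ` qd" using hB im2 by simp
    then obtain pr where "pr \<in> qd" "B = snd pr" by blast
    then have "(fst pr, B) \<in> qd" by simp
    then show ?thesis unfolding r2_def by (rule someI)
  qed
  have F3: "r2 (f2 A) = A" if "A \<in> cosets G Ps" for A
  proof -
    have a: "(A, f2 A) \<in> qd" using F1 that .
    then have "f2 A \<in> cosets H Qs" using qd_mem by blast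
    then have b: "(r2 (f2 A), f2 A) \<in> qd" using F2 by blast
    have "(r2 (f2 A), f2 A) = (A, f2 A)" using inj_onD[OF i2 _ b a] by simp
    then show ?thesis by simp
  qed
  have F4: "f2 (r2 B) = B" if "B \<in> cosets H Qs" for B
  proof -
    have a: "(r2 B, B) \<in> qd" using F2 that .
    then have "r2 B \<in> cosets G Ps" using qd_mem by blast
    then have b: "(r2 B, f2 (r2 B)) \<in> qd" using F1 by blast
    have "(r2 B, f2 (r2 B)) = (r2 B, B)" using inj_onD[OF i1 _ b a] by simp
    then show ?thesis by simp
  qed
  have R1: "r1 h \<in> carrier G \<and> wdist H T (q (r1 h)) h \<le> C" if hh: "h \<in> carrier H" for h
  proof -
    obtain g where "g \<in> carrier G \<and> wdist H T (q g) h \<le> C" using qden hh by blast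
    then show ?thesis unfolding r1_def by (rule someI)
  qed
  have QL: "wdist G S x y \<le> L * (wdist H T (q x) (q y) + C)" if "x \<in> carrier G" "y \<in> carrier G" for x y
  proof -
    have "wdist G S x y / L - C \<le> wdist H T (q x) (q y)" using qlow that by blast
    then have "wdist G S x y / L \<le> wdist H T (q x) (q y) + C" by linarith
    then show ?thesis using LCM by (simp add: divide_le_eq mult.commute)
  qed
  have KEY: "wdist G S (r1 b) a \<le> L * (M + 2 * C)"
    if ab: "a \<in> carrier G" "b \<in> carrier H" "wdist H T (q a) b < M" for a b
  proof -
    have rb: "r1 b \<in> carrier G" "wdist H T (q (r1 b)) b \<le> C" using R1 ab by auto
    have qa: "q a \<in> carrier H" "q (r1 b) \<in> carrier H" using qc ab rb by auto
    have "wdist H T (q (r1 b)) (q a) \<le> wdist H T (q (r1 b)) b + wdist H T b (q a)"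
      using qa ab by (intro wdist_tri[OF mH])
    also have "wdist H T b (q a) = wdist H T (q a) b" using qa ab by (intro wdist_sym[OF mH])
    finally have "wdist H T (q (r1 b)) (q a) + C \<le> M + 2 * C" using rb ab by linarith
    then have "L * (wdist H T (q (r1 b)) (q a) + C) \<le> L * (M + 2 * C)" using LCM by (intro mult_left_mono) auto
    moreover have "wdist G S (r1 b) a \<le> L * (wdist H T (q (r1 b)) (q a) + C)" using QL rb ab by blast
    ultimately show ?thesis by linarith
  qed
  define C' where "C' = 3 * L * C"
  define M' where "M' = L * (M + 2 * C) + 1"
  have lc: "C \<le> L * C" "M \<le> L * M" using LCM mult_right_mono[of 1 L C] mult_right_mono[of 1 L M] by simp_all
  have c'e: "C' = 3 * (L * C)" unfolding C'_def by simp
  have m'e: "M' = L * M + 2 * (L * C) + 1" unfolding M'_def by (simp add: algebra_simps)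
  have lcc: "L * (C + C) = 2 * (L * C)" by (simp add: algebra_simps)
  have LC: "C \<le> C'" "L * (C + C) \<le> C'" "C' \<ge> 0" using lc LCM c'e lcc by linarith+
  have LM: "M \<le> M'" "M' \<ge> 0" using lc LCM m'e by linarith+
  have lipf: "lipschitz_pairs G S Ps H T Qs L C' M' q f2"
    unfolding lipschitz_pairs_def lipschitz_map_def
  proof (intro conjI ballI subsetI)
    show "x \<in> q ` carrier G \<Longrightarrow> x \<in> carrier H" for x using qc by auto
    fix x y assume "x \<in> carrier G" "y \<in> carrier G"
    then have "wdist H T (q x) (q y) \<le> L * wdist G S x y + C" using qup by blast
    then show "wdist H T (q x) (q y) \<le> L * wdist G S x y + C'" using LC by linarith
  next
    fix B assume "B \<in> f2 ` cosets G Ps"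
    then obtain A where "A \<in> cosets G Ps" "B = f2 A" by blast
    then show "B \<in> cosets H Qs" using F1 qd_mem by blast
  next
    fix A assume "A \<in> cosets G Ps"
    then have "hausdorff H T (q ` snd A) (snd (f2 A)) < ereal M" using F1 qd_mem by blast
    also have "ereal M \<le> ereal M'" using LM by simp
    finally show "hausdorff H T (q ` snd A) (snd (f2 A)) < ereal M'" .
  qed
  have lipr: "lipschitz_pairs H T Qs G S Ps L C' M' r1 r2"
    unfolding lipschitz_pairs_def lipschitz_map_def
  proof (intro conjI ballI subsetI)
    show "x \<in> r1 ` carrier H \<Longrightarrow> x \<in> carrier G" for x using R1 by auto
    fix x y assume xy: "x \<in> carrier H" "y \<in> carrier H"
    have rx: "r1 x \<in> carrier G" "r1 y \<in> carrier G" "wdist H T (q (r1 x)) x \<le> C" "wdist H T (q (r1 y)) y \<le> C"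
      using R1 xy by auto
    have qx: "q (r1 x) \<in> carrier H" "q (r1 y) \<in> carrier H" using qc rx by auto
    have t1: "wdist H T (q (r1 x)) (q (r1 y)) \<le> wdist H T (q (r1 x)) x + wdist H T x (q (r1 y))"
      using qx xy by (intro wdist_tri[OF mH])
    have t2: "wdist H T x (q (r1 y)) \<le> wdist H T x y + wdist H T y (q (r1 y))"
      using qx xy by (intro wdist_tri[OF mH])
    have t3: "wdist H T y (q (r1 y)) = wdist H T (q (r1 y)) y"
      using qx xy by (intro wdist_sym[OF mH])
    have "wdist H T (q (r1 x)) (q (r1 y)) + C \<le> wdist H T x y + 3 * C" using t1 t2 t3 rx by linarith
    then have "L * (wdist H T (q (r1 x)) (q (r1 y)) + C) \<le> L * (wdist H T x y + 3 * C)"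
      using LCM by (intro mult_left_mono) auto
    moreover have "wdist G S (r1 x) (r1 y) \<le> L * (wdist H T (q (r1 x)) (q (r1 y)) + C)" using QL rx by blast
    ultimately show "wdist G S (r1 x) (r1 y) \<le> L * wdist H T x y + C'"
      unfolding C'_def by (simp add: algebra_simps)
  next
    fix A assume "A \<in> r2 ` cosets H Qs"
    then obtain B where "B \<in> cosets H Qs" "A = r2 B" by blast
    then show "A \<in> cosets G Ps" using F2 qd_mem by blast
  next
    fix B assume B: "B \<in> cosets H Qs"
    then have hB: "hausdorff H T (q ` snd (r2 B)) (snd B) < ereal M" and
      A: "r2 B \<in> cosets G Ps" using F2 qd_mem by blast+
    have sA: "snd (r2 B) \<subseteq> carrier G" using cosets_sub[OF gp1 A] .
    have sB: "snd B \<subseteq> carrier H" using cosets_sub[OF gp2 B] .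
    have "hausdorff G S (r1 ` snd B) (snd (r2 B)) \<le> ereal (L * (M + 2 * C))"
    proof (rule haus_le)
      show "\<forall>x\<in>r1 ` snd B. \<exists>a\<in>snd (r2 B). wdist G S x a \<le> L * (M + 2 * C)"
      proof
        fix x assume "x \<in> r1 ` snd B"
        then obtain b where b: "b \<in> snd B" "x = r1 b" by blast
        obtain y where y: "y \<in> q ` snd (r2 B)" "wdist H T y b < M" using haus_lt2[OF hB b(1)] by blast
        then obtain a where a: "a \<in> snd (r2 B)" "y = q a" by blast
        have "wdist G S (r1 b) a \<le> L * (M + 2 * C)" using KEY a b y sA sB by blast
        then show "\<exists>a\<in>snd (r2 B). wdist G S x a \<le> L * (M + 2 * C)" using a b by blast
      qed
      show "\<forall>a\<in>snd (r2 B). \<exists>x\<in>r1 ` snd B. wdist G S x a \<le> L * (M + 2 * C)"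
      proof
        fix a assume a: "a \<in> snd (r2 B)"
        then have "q a \<in> q ` snd (r2 B)" by blast
        then obtain b where b: "b \<in> snd B" "wdist H T (q a) b < M" using haus_lt1[OF hB] by blast
        have "wdist G S (r1 b) a \<le> L * (M + 2 * C)" using KEY a b sA sB by blast
        then show "\<exists>x\<in>r1 ` snd B. wdist G S x a \<le> L * (M + 2 * C)" using b by blast
      qed
    qed
    also have "\<dots> < ereal M'" unfolding M'_def by simp
    finally show "hausdorff G S (r1 ` snd B) (snd (r2 B)) < ereal M'" .
  qed
  have ret1: "\<forall>g\<in>carrier G. wdist G S (r1 (q g)) g \<le> C'"
  proof
    fix g assume g: "g \<in> carrier G"
    then have qg: "q g \<in> carrier H" using qc by auto
    have rb: "r1 (q g) \<in> carrier G" "wdist H T (q (r1 (q g))) (q g) \<le> C" using R1 qg by auto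
    have "wdist G S (r1 (q g)) g \<le> L * (wdist H T (q (r1 (q g))) (q g) + C)" using QL rb g by blast
    also have "\<dots> \<le> L * (C + C)" using rb LCM by (intro mult_left_mono) auto
    finally show "wdist G S (r1 (q g)) g \<le> C'" using LC by linarith
  qed
  have ret2: "\<forall>h\<in>carrier H. wdist H T (q (r1 h)) h \<le> C'" using R1 LC by force
  have "strong_qi_pairs G S Ps H T Qs L C' M' q f2"
    unfolding strong_qi_pairs_def quasi_retraction_pairs_def
    using lipf lipr ret1 ret2 F3 F4 by blast
  then show ?thesis unfolding pairs_strongly_quasi_isometric_def using LCM LC LM by blast
qed


theorem lemma2p6:
  fixes G :: "('a, 'b) monoid_scheme" and H :: "('c, 'd) monoid_scheme"
    and S :: "'a set" and T :: "'c set" and Ps :: "'a set list" and Qs :: "'c set list"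
  assumes "group_pair G S Ps" and "group_pair H T Qs"
  shows "(\<forall>L C M q. L \<ge> 1 \<and> C \<ge> 0 \<and> M \<ge> 0 \<and> qi_pairs G S Ps H T Qs L C M q \<and>
             bij_betw fst (qdot G Ps H T Qs M q) (cosets G Ps) \<and>
             bij_betw snd (qdot G Ps H T Qs M q) (cosets H Qs)
           \<longrightarrow> pairs_strongly_quasi_isometric G S Ps H T Qs)
       \<and> (pairs_strongly_quasi_isometric G S Ps H T Qs \<longrightarrow> pairs_quasi_isometric G S Ps H T Qs)"
  using part1[OF assms] part2[OF assms] by blast

end
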